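(* Let $J=S\Upsilon_1S^{-1}=\bar S\Upsilon_2^\top\bar S^{-1}$. Then for $a=1,\dots,p_1$, $b=1,\dots,p_2$, $$J\mathcal A_a(z)=z\mathcal A_a(z),\quad J^\top\bar{\mathcal A}_b(z)=z\bar{\mathcal A}_b(z),\quad J\mathcal C_b(z)=z\mathcal C_b(z)-c_b,\quad J^\top\bar{\mathcal C}_a(z)=z\bar{\mathcal C}_a(z)-\bar c_a .$$
   Context: Setting: $\mu$ finite Borel measure on an interval, weights $w_{1,a}$ ($a\le p_1$), $w_{2,b}$ ($b\le p_2$), compositions $\vec n_\ell\in\mathbb N^{p_\ell}$; each $i\in\mathbb Z_+$ is uniquely $i=q|\vec n_\ell|+n_{\ell,1}+\dots+n_{\ell,a-1}+r$ ($0\le r<n_{\ell,a}$), $a_\ell(i)=a$, $k_\ell(i)=qn_{\ell,a}+r$; moment matrix $g_{i,j}=\int x^{k_1(i)+k_2(j)}w_{1,a_1(i)}w_{2,a_2(j)}d\mu$, assumed to have Gauss–Borel factorization $g=S^{-1}\bar S$ ($S$ unit lower triangular, $\bar S$ upper triangular invertible). $e_{\ell,a}(k)=e_i$ with $a_\ell(i)=a,k_\ell(i)=k$; $\Lambda_{\ell,a}=\sum_ke_{\ell,a}(k)e_{\ell,a}(k+1)^\top$, $\Upsilon_\ell=\sum_a\Lambda_{\ell,a}$. $\chi_{\ell,a}(z)=\sum_ke_{\ell,a}(k)z^k$ and $\chi^*_{\ell,a}(z)=z^{-1}\chi_{\ell,a}(z^{-1})$. Strings of polynomials $\mathcal A_a=S\chi_{1,a}$,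 $\bar{\mathcal A}_b=(\bar S^{-1})^\top\chi_{2,b}$; strings of second kind functions (formal series in $z^{-1}$) $\mathcal C_b=\bar S\chi^*_{2,b}(z)$, $\bar{\mathcal C}_a=(S^{-1})^\top\chi^*_{1,a}(z)$; vectors $c_b=\bar Se_{2,b}(0)$, $\bar c_a=(S^{-1})^\top e_{1,a}(0)$. *)

theory Defs
  imports "HOL-Analysis.Analysis" "HOL-Computational_Algebra.Polynomial"
          "HOL-Computational_Algebra.Formal_Laurent_Series"
begin

text \<open>Semi-infinite matrices are functions nat => nat => real (row index, column index);
  semi-infinite vectors are functions on nat.  Indices of the multi-index
  composition run over 1..p.\<close>

type_synonym smat = "nat \<Rightarrow> nat \<Rightarrow> real"

definition comp_size :: "(nat \<Rightarrow> nat) \<Rightarrow> nat \<Rightarrow> nat" where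
  "comp_size n p = (\<Sum>a\<in>{1..p}. n a)"

definition decomp :: "(nat \<Rightarrow> nat) \<Rightarrow> nat \<Rightarrow> nat \<Rightarrow> nat \<times> nat \<times> nat" where
  "decomp n p i = (THE (q, a, r). 1 \<le> a \<and> a \<le> p \<and> r < n a \<and>
      i = q * comp_size n p + (\<Sum>b\<in>{1..<a}. n b) + r)"

definition aidx :: "(nat \<Rightarrow> nat) \<Rightarrow> nat \<Rightarrow> nat \<Rightarrow> nat" where
  "aidx n p i = fst (snd (decomp n p i))"

definition kidx :: "(nat \<Rightarrow> nat) \<Rightarrow> nat \<Rightarrow> nat \<Rightarrow> nat" where
  "kidx n p i = (case decomp n p i of (q, a, r) \<Rightarrow> q * n a + r)"

text \<open>e_a(k) = e_i where a(i) = a and k(i) = k; we record the index i.\<close>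
definition eidx :: "(nat \<Rightarrow> nat) \<Rightarrow> nat \<Rightarrow> nat \<Rightarrow> nat \<Rightarrow> nat" where
  "eidx n p a k = (THE i. aidx n p i = a \<and> kidx n p i = k)"

text \<open>Lambda_a = sum_k e_a(k) e_a(k+1)^T, Upsilon = sum_a Lambda_a.\<close>
definition Lam :: "(nat \<Rightarrow> nat) \<Rightarrow> nat \<Rightarrow> nat \<Rightarrow> smat" where
  "Lam n p a i j = (if \<exists>k. i = eidx n p a k \<and> j = eidx n p a (Suc k) then 1 else 0)"

definition Ups :: "(nat \<Rightarrow> nat) \<Rightarrow> nat \<Rightarrow> smat" where
  "Ups n p i j = (\<Sum>a\<in>{1..p}. Lam n p a i j)"

definition smat_transpose :: "smat \<Rightarrow> smat" where
  "smat_transpose M i j = M j i"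

definition smat_id :: smat where
  "smat_id i j = (if i = j then 1 else 0)"

text \<open>Product of semi-infinite matrices: sum over the (finitely many, in all uses)
  indices k with nonzero contribution.\<close>
definition smat_mult :: "smat \<Rightarrow> smat \<Rightarrow> smat" where
  "smat_mult A B i j = (\<Sum>k\<in>{k. A i k \<noteq> 0 \<and> B k j \<noteq> 0}. A i k * B k j)"

definition lower_tri :: "smat \<Rightarrow> bool" where
  "lower_tri M \<longleftrightarrow> (\<forall>i j. i < j \<longrightarrow> M i j = 0)"

definition upper_tri :: "smat \<Rightarrow> bool" where
  "upper_tri M \<longleftrightarrow> (\<forall>i j. j < i \<longrightarrow> M i j = 0)"

definition mv_poly :: "smat \<Rightarrow> (nat \<Rightarrow> real poly) \<Rightarrow> nat \<Rightarrow> real poly" where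
  "mv_poly M v i = (\<Sum>k\<in>{k. M i k \<noteq> 0 \<and> v k \<noteq> 0}. smult (M i k) (v k))"

text \<open>Matrix acting (coefficientwise) on a vector of formal power series in w = z^(-1).\<close>
definition mv_fps :: "smat \<Rightarrow> (nat \<Rightarrow> real fps) \<Rightarrow> nat \<Rightarrow> real fps" where
  "mv_fps M v i = Abs_fps (\<lambda>m. \<Sum>k\<in>{k. M i k \<noteq> 0 \<and> v k $ m \<noteq> 0}. M i k * (v k $ m))"

definition chi :: "(nat \<Rightarrow> nat) \<Rightarrow> nat \<Rightarrow> nat \<Rightarrow> nat \<Rightarrow> real poly" where
  "chi n p a i = (if aidx n p i = a then monom 1 (kidx n p i) else 0)"

text \<open>chi*_a(z) = z^(-1) chi_a(z^(-1)) = sum_k e_a(k) z^(-k-1), a vector of formal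
  power series in w = z^(-1) (entry w^(k+1)).\<close>
definition chistar :: "(nat \<Rightarrow> nat) \<Rightarrow> nat \<Rightarrow> nat \<Rightarrow> nat \<Rightarrow> real fps" where
  "chistar n p a i = (if aidx n p i = a then fps_X ^ (Suc (kidx n p i)) else 0)"

end

theory Submission
  imports Defs
begin



definition psum :: "(nat \<Rightarrow> nat) \<Rightarrow> nat \<Rightarrow> nat" where
  "psum n a = (\<Sum>b\<in>{1..<a}. n b)"

lemma psum_Suc: "1 \<le> a \<Longrightarrow> psum n (Suc a) = psum n a + n a"
  unfolding psum_def by (simp add: atLeastLessThanSuc add.commute)

lemma psum_le:
  assumes "1 \<le> a" "a < a'"
  shows "psum n a + n a \<le> psum n a'"
proof -
  have "{1..<a'} = {1..<a} \<union> {a..<a'}" using assms by auto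
  hence "psum n a' = psum n a + (\<Sum>b\<in>{a..<a'}. n b)"
    unfolding psum_def by (simp add: sum.union_disjoint ivl_disj_int)
  moreover have "n a \<le> (\<Sum>b\<in>{a..<a'}. n b)"
    using assms by (intro member_le_sum) auto
  ultimately show ?thesis by simp
qed

lemma comp_size_psum: "comp_size n p = psum n (Suc p)"
  unfolding comp_size_def psum_def by (simp add: atLeastLessThanSuc_atLeastAtMost)

lemma s_lt_N:
  assumes "1 \<le> a" "a \<le> p" "r < n a"
  shows "psum n a + r < comp_size n p"
proof (cases "a = p")
  case True thus ?thesis using assms psum_Suc[of a n] comp_size_psum[of n p] by simp
next
  case False thus ?thesis using assms psum_le[of a "Suc p" n] comp_size_psum[of n p] by simp
qed

lemma decomp_uniq:
  assumes "1 \<le> a" "a \<le> p" "r < n a" "1 \<le> a'" "a' \<le> p" "r' < n a'"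
    and eq: "q * comp_size n p + psum n a + r = q' * comp_size n p + psum n a' + r'"
  shows "q = q' \<and> a = a' \<and> r = r'"
proof -
  let ?N = "comp_size n p"
  have s1: "psum n a + r < ?N" and s2: "psum n a' + r' < ?N" using s_lt_N assms by auto
  have "(q * ?N + (psum n a + r)) div ?N = (q' * ?N + (psum n a' + r')) div ?N"
       "(q * ?N + (psum n a + r)) mod ?N = (q' * ?N + (psum n a' + r')) mod ?N"
    using eq by (simp_all add: add.assoc)
  hence qq: "q = q'" and ss: "psum n a + r = psum n a' + r'" using s1 s2 by auto
  have "a = a'"
  proof (rule ccontr)
    assume "a \<noteq> a'"
    then consider "a < a'" | "a' < a" by linarith
    thus False
    proof cases
      case 1 thus False using psum_le[of a a' n] assms ss by simp
    next
      case 2 thus False using psum_le[of a' a n] assms ss by simp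
    qed
  qed
  thus ?thesis using qq ss by simp
qed

lemma decomp_ex:
  assumes p: "p \<ge> 1" and n: "\<forall>a\<in>{1..p}. n a \<ge> 1"
  shows "\<exists>q a r. 1 \<le> a \<and> a \<le> p \<and> r < n a \<and> i = q * comp_size n p + psum n a + r"
proof -
  let ?N = "comp_size n p"
  define s where "s = i mod ?N"
  define A where "A = {a\<in>{1..p}. psum n a \<le> s}"
  have "1 \<in> A" unfolding A_def psum_def using p by auto
  have fA: "finite A" unfolding A_def by auto
  define a where "a = Max A"
  have aA: "a \<in> A" unfolding a_def using fA \<open>1 \<in> A\<close> by (intro Max_in) auto
  have "n 1 \<ge> 1" using n p by auto
  hence Npos: "?N > 0" using psum_le[of 1 "Suc p" n] p comp_size_psum[of n p] by simp
  have sN: "s < ?N" using Npos unfolding s_def by simp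
  have r: "s - psum n a < n a"
  proof (cases "a = p")
    case True thus ?thesis using aA psum_Suc[of a n] comp_size_psum[of n p] sN
      unfolding A_def by auto
  next
    case False
    hence "Suc a \<notin> A" using fA aA unfolding a_def
      by (metis Max_ge Suc_n_not_le_n)
    hence "psum n (Suc a) > s" using aA False unfolding A_def by auto
    thus ?thesis using psum_Suc[of a n] aA unfolding A_def by auto
  qed
  have "i = (i div ?N) * ?N + s" unfolding s_def by (metis div_mult_mod_eq)
  hence "i = (i div ?N) * ?N + psum n a + (s - psum n a)"
    using aA unfolding A_def by simp
  thus ?thesis using aA r unfolding A_def
    by (intro exI[of _ "i div ?N"] exI[of _ a] exI[of _ "s - psum n a"]) auto
qed

lemma decomp_eq:
  assumes "1 \<le> a" "a \<le> p" "r < n a"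
  shows "decomp n p (q * comp_size n p + psum n a + r) = (q, a, r)"
  unfolding decomp_def
proof (rule the_equality)
  show "case (q, a, r) of (q', a', r') \<Rightarrow> 1 \<le> a' \<and> a' \<le> p \<and> r' < n a' \<and>
      q * comp_size n p + psum n a + r = q' * comp_size n p + (\<Sum>b\<in>{1..<a'}. n b) + r'"
    using assms by (simp add: psum_def)
next
  fix x assume "case x of (q', a', r') \<Rightarrow> 1 \<le> a' \<and> a' \<le> p \<and> r' < n a' \<and>
      q * comp_size n p + psum n a + r = q' * comp_size n p + (\<Sum>b\<in>{1..<a'}. n b) + r'"
  moreover obtain q' a' r' where x: "x = (q', a', r')" by (cases x)
  ultimately show "x = (q, a, r)"
    using decomp_uniq[where a=a and p=p and r=r and n=n and a'=a' and r'=r' and q=q and q'=q', unfolded psum_def]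
      assms by (auto simp: psum_def)
qed

lemma decomp_prop:
  assumes p: "p \<ge> 1" and n: "\<forall>a\<in>{1..p}. n a \<ge> 1"
  obtains q a r where "1 \<le> a" "a \<le> p" "r < n a" "i = q * comp_size n p + psum n a + r"
     "decomp n p i = (q, a, r)"
proof -
  obtain q a r where h: "1 \<le> a" "a \<le> p" "r < n a" "i = q * comp_size n p + psum n a + r"
    using decomp_ex[OF p n, of i] by blast
  have "decomp n p i = (q, a, r)" using decomp_eq[where a=a and p=p and r=r and n=n and q=q] h(1-3) h(4) by simp
  thus ?thesis by (rule that[OF h(1-4)])
qed

lemma aidx_range:
  assumes p: "p \<ge> 1" and n: "\<forall>a\<in>{1..p}. n a \<ge> 1"
  shows "aidx n p i \<in> {1..p}"
proof -
  obtain q a r where h: "1 \<le> a" "a \<le> p" "decomp n p i = (q, a, r)"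
    using decomp_prop[OF p n, of i] by metis
  thus ?thesis unfolding aidx_def by simp
qed

lemma eidx_char:
  assumes p: "p \<ge> 1" and n: "\<forall>a\<in>{1..p}. n a \<ge> 1" and a: "a \<in> {1..p}"
  shows "(aidx n p i = a \<and> kidx n p i = k) \<longleftrightarrow> i = eidx n p a k"
proof -
  let ?N = "comp_size n p"
  define i0 where "i0 = (k div n a) * ?N + psum n a + k mod n a"
  have "n a \<ge> 1" using n a by blast
  hence na: "n a > 0" by simp
  have d0: "decomp n p i0 = (k div n a, a, k mod n a)"
    unfolding i0_def using a na decomp_eq[where a=a and p=p and r="k mod n a" and n=n and q="k div n a"]
    by auto
  have P0a: "aidx n p i0 = a" unfolding aidx_def d0 by simp
  have P0k: "kidx n p i0 = k" unfolding kidx_def d0 by simp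
  have P0: "aidx n p i0 = a \<and> kidx n p i0 = k" using P0a P0k by blast
  have U: "i = i0" if "aidx n p i = a \<and> kidx n p i = k" for i
  proof -
    obtain q a' r where h: "1 \<le> a'" "a' \<le> p" "r < n a'" "i = q * ?N + psum n a' + r"
       "decomp n p i = (q, a', r)" by (rule decomp_prop[OF p n, of i])
    have ai: "aidx n p i = a'" using h(5) by (simp add: aidx_def)
    have ki: "kidx n p i = q * n a' + r" using h(5) by (simp add: kidx_def)
    have "a' = a" using ai that by simp
    hence "q * n a + r = k" using ki that by simp
    moreover have "r < n a" using h(3) \<open>a' = a\<close> by simp
    ultimately have "q = k div n a \<and> r = k mod n a"
    proof -
      assume a: "q * n a + r = k" "r < n a"
      hence k: "k = r + q * n a" by simp
      have "n a \<noteq> 0" using a by auto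
      thus ?thesis unfolding k using a(2) by simp
    qed
    thus ?thesis using h(4) \<open>a' = a\<close> unfolding i0_def by blast
  qed
  have "eidx n p a k = i0" unfolding eidx_def
  proof (rule the_equality)
    show "aidx n p i0 = a \<and> kidx n p i0 = k" by (rule P0)
  next
    fix i assume "aidx n p i = a \<and> kidx n p i = k" thus "i = i0" by (rule U)
  qed
  hence E: "eidx n p a k = i0" .
  show ?thesis
  proof
    assume "aidx n p i = a \<and> kidx n p i = k" thus "i = eidx n p a k" using U E by simp
  next
    assume "i = eidx n p a k" thus "aidx n p i = a \<and> kidx n p i = k" using P0 E by simp
  qed
qed




definition rowfin :: "smat \<Rightarrow> bool" where
  "rowfin A \<longleftrightarrow> (\<forall>i. finite {k. A i k \<noteq> 0})"
definition colfin :: "smat \<Rightarrow> bool" where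
  "colfin A \<longleftrightarrow> (\<forall>j. finite {k. A k j \<noteq> 0})"

lemma mult_eq_sum:
  assumes "finite F" "\<And>k. A i k \<noteq> 0 \<Longrightarrow> B k j \<noteq> 0 \<Longrightarrow> k \<in> F"
  shows "smat_mult A B i j = (\<Sum>k\<in>F. A i k * B k j)"
  unfolding smat_mult_def
  by (rule sum.mono_neutral_left) (use assms in auto)

lemma mult_transpose: "smat_transpose (smat_mult A B) = smat_mult (smat_transpose B) (smat_transpose A)"
  unfolding smat_transpose_def smat_mult_def by (intro ext) (simp add: mult.commute conj_commute)

lemma transpose_transpose[simp]: "smat_transpose (smat_transpose A) = A"
  unfolding smat_transpose_def by simp

lemma colfin_rowfin: "colfin A \<longleftrightarrow> rowfin (smat_transpose A)"
  unfolding colfin_def rowfin_def smat_transpose_def by simp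

lemma rowfin_colfin: "rowfin A \<longleftrightarrow> colfin (smat_transpose A)"
  unfolding colfin_def rowfin_def smat_transpose_def by simp

lemma rowfin_mult:
  assumes "rowfin A" "rowfin B" shows "rowfin (smat_mult A B)"
  unfolding rowfin_def
proof
  fix i
  let ?R = "{k. A i k \<noteq> 0}"
  have "{m. smat_mult A B i m \<noteq> 0} \<subseteq> (\<Union>k\<in>?R. {m. B k m \<noteq> 0})"
  proof
    fix m assume "m \<in> {m. smat_mult A B i m \<noteq> 0}"
    hence "{k. A i k \<noteq> 0 \<and> B k m \<noteq> 0} \<noteq> {}" unfolding smat_mult_def by force
    thus "m \<in> (\<Union>k\<in>?R. {m. B k m \<noteq> 0})" by auto
  qed
  moreover have "finite (\<Union>k\<in>?R. {m. B k m \<noteq> 0})"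
    using assms unfolding rowfin_def by auto
  ultimately show "finite {m. smat_mult A B i m \<noteq> 0}" by (rule finite_subset)
qed

lemma colfin_mult:
  assumes "colfin A" "colfin B" shows "colfin (smat_mult A B)"
  using rowfin_mult[of "smat_transpose B" "smat_transpose A"] assms
  by (simp add: colfin_rowfin mult_transpose)

lemma assoc_row:
  assumes A: "rowfin A" and B: "rowfin B"
  shows "smat_mult (smat_mult A B) C = smat_mult A (smat_mult B C)"
proof (intro ext)
  fix i j
  define R where "R = {k. A i k \<noteq> 0}"
  define T where "T = (\<Union>k\<in>R. {m. B k m \<noteq> 0})"
  have fR: "finite R" using A unfolding rowfin_def R_def by auto
  have fT: "finite T" using B fR unfolding rowfin_def T_def by auto
  have AB: "smat_mult A B i m = (\<Sum>k\<in>R. A i k * B k m)" for m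
    by (rule mult_eq_sum) (use fR R_def in auto)
  have BC: "smat_mult B C k j = (\<Sum>m\<in>T. B k m * C m j)" if "k \<in> R" for k
    by (rule mult_eq_sum) (use fT that T_def in auto)
  have "smat_mult (smat_mult A B) C i j = (\<Sum>m\<in>T. smat_mult A B i m * C m j)"
  proof (rule mult_eq_sum[OF fT])
    fix m assume "smat_mult A B i m \<noteq> 0"
    hence "{k. A i k \<noteq> 0 \<and> B k m \<noteq> 0} \<noteq> {}" unfolding smat_mult_def by force
    thus "m \<in> T" unfolding T_def R_def by auto
  qed
  also have "\<dots> = (\<Sum>m\<in>T. \<Sum>k\<in>R. A i k * B k m * C m j)"
    by (simp add: AB sum_distrib_right)
  also have "\<dots> = (\<Sum>k\<in>R. \<Sum>m\<in>T. A i k * B k m * C m j)"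
    by (rule sum.swap)
  also have "\<dots> = (\<Sum>k\<in>R. A i k * smat_mult B C k j)"
    by (intro sum.cong refl) (simp add: BC sum_distrib_left mult.assoc)
  also have "\<dots> = smat_mult A (smat_mult B C) i j"
    by (rule mult_eq_sum[symmetric]) (use fR R_def in auto)
  finally show "smat_mult (smat_mult A B) C i j = smat_mult A (smat_mult B C) i j" .
qed

lemma assoc_col:
  assumes B: "colfin B" and C: "colfin C"
  shows "smat_mult (smat_mult A B) C = smat_mult A (smat_mult B C)"
proof -
  have "smat_transpose (smat_mult (smat_mult A B) C) = smat_transpose (smat_mult A (smat_mult B C))"
    using assoc_row[of "smat_transpose C" "smat_transpose B" "smat_transpose A"] B C
    by (simp add: mult_transpose colfin_rowfin)
  thus ?thesis by (metis transpose_transpose)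
qed

lemma mult_id_right[simp]: "smat_mult M smat_id = M"
proof (intro ext)
  fix i j show "smat_mult M smat_id i j = M i j"
    by (subst mult_eq_sum[of "{j}"]) (auto simp: smat_id_def split: if_splits)
qed

lemma mult_id_left[simp]: "smat_mult smat_id M = M"
proof (intro ext)
  fix i j show "smat_mult smat_id M i j = M i j"
    by (subst mult_eq_sum[of "{i}"]) (auto simp: smat_id_def split: if_splits)
qed

lemma transpose_id[simp]: "smat_transpose smat_id = smat_id"
  unfolding smat_transpose_def smat_id_def by (intro ext) auto

lemma lower_rowfin: "lower_tri M \<Longrightarrow> rowfin M"
  unfolding lower_tri_def rowfin_def
  by (auto intro: finite_subset[of _ "{..i}" for i] simp: not_le[symmetric])

lemma upper_colfin: "upper_tri M \<Longrightarrow> colfin M"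
  unfolding upper_tri_def colfin_def
  by (auto intro: finite_subset[of _ "{..i}" for i] simp: not_le[symmetric])




definition nxt :: "(nat \<Rightarrow> nat) \<Rightarrow> nat \<Rightarrow> nat \<Rightarrow> nat" where
  "nxt n p i = eidx n p (aidx n p i) (Suc (kidx n p i))"

context
  fixes n :: "nat \<Rightarrow> nat" and p :: nat
  assumes p: "p \<ge> 1" and n: "\<forall>a\<in>{1..p}. n a \<ge> 1"
begin

lemma aidx_eidx: "a \<in> {1..p} \<Longrightarrow> aidx n p (eidx n p a k) = a"
  using eidx_char[OF p n, of a "eidx n p a k" k] by simp

lemma kidx_eidx: "a \<in> {1..p} \<Longrightarrow> kidx n p (eidx n p a k) = k"
  using eidx_char[OF p n, of a "eidx n p a k" k] by simp

lemma eidx_aidx_kidx: "eidx n p (aidx n p i) (kidx n p i) = i"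
  using eidx_char[OF p n aidx_range[OF p n, of i], of i "kidx n p i"] by simp

lemma aidx_nxt: "aidx n p (nxt n p i) = aidx n p i"
  unfolding nxt_def using aidx_eidx aidx_range[OF p n] by simp

lemma kidx_nxt: "kidx n p (nxt n p i) = Suc (kidx n p i)"
  unfolding nxt_def using kidx_eidx aidx_range[OF p n] by simp

lemma nxt_inj: "inj (nxt n p)"
proof
  fix i j assume "nxt n p i = nxt n p j"
  hence "aidx n p i = aidx n p j" "kidx n p i = kidx n p j"
    using aidx_nxt[of i] aidx_nxt[of j] kidx_nxt[of i] kidx_nxt[of j] by auto
  thus "i = j" using eidx_aidx_kidx[of i] eidx_aidx_kidx[of j] by metis
qed

lemma Lam_char:
  assumes a: "a \<in> {1..p}"
  shows "Lam n p a i j = (if a = aidx n p i \<and> j = nxt n p i then 1 else 0)"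
proof -
  have "(\<exists>k. i = eidx n p a k \<and> j = eidx n p a (Suc k)) \<longleftrightarrow> (a = aidx n p i \<and> j = nxt n p i)"
  proof
    assume "\<exists>k. i = eidx n p a k \<and> j = eidx n p a (Suc k)"
    then obtain k where k: "i = eidx n p a k" "j = eidx n p a (Suc k)" by blast
    hence "aidx n p i = a" "kidx n p i = k" using eidx_char[OF p n a] by auto
    thus "a = aidx n p i \<and> j = nxt n p i" using k unfolding nxt_def by simp
  next
    assume h: "a = aidx n p i \<and> j = nxt n p i"
    hence "i = eidx n p a (kidx n p i)" using eidx_aidx_kidx[of i] by simp
    thus "\<exists>k. i = eidx n p a k \<and> j = eidx n p a (Suc k)" using h unfolding nxt_def by blast
  qed
  thus ?thesis unfolding Lam_def by simp
qed

lemma Ups_char: "Ups n p i j = (if j = nxt n p i then 1 else 0)"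
proof -
  have "Ups n p i j = (\<Sum>a\<in>{1..p}. if a = aidx n p i then (if j = nxt n p i then 1 else 0) else 0)"
    unfolding Ups_def by (intro sum.cong refl) (simp add: Lam_char)
  also have "\<dots> = (if j = nxt n p i then 1 else 0)"
    using aidx_range[OF p n, of i] by (simp add: sum.delta)
  finally show ?thesis .
qed

end



definition Xm :: "(nat \<Rightarrow> nat) \<Rightarrow> nat \<Rightarrow> nat \<Rightarrow> smat" where
  "Xm n p a k m = (if aidx n p k = a \<and> kidx n p k = m then 1 else 0)"
definition Ym :: "(nat \<Rightarrow> nat) \<Rightarrow> nat \<Rightarrow> nat \<Rightarrow> smat" where
  "Ym n p a k m = (if aidx n p k = a \<and> m = Suc (kidx n p k) then 1 else 0)"

lemma coeff_mv_poly:
  assumes "rowfin M"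
  shows "coeff (mv_poly M v i) m = smat_mult M (\<lambda>k m. coeff (v k) m) i m"
proof -
  let ?K = "{k. M i k \<noteq> 0 \<and> v k \<noteq> 0}"
  have fK: "finite ?K" using assms unfolding rowfin_def
    by (rule_tac finite_subset[of _ "{k. M i k \<noteq> 0}"]) auto
  have "coeff (mv_poly M v i) m = (\<Sum>k\<in>?K. M i k * coeff (v k) m)"
    unfolding mv_poly_def by (simp add: coeff_sum)
  also have "\<dots> = smat_mult M (\<lambda>k m. coeff (v k) m) i m"
    by (rule mult_eq_sum[symmetric]) (use fK in auto)
  finally show ?thesis .
qed

lemma nth_mv_fps: "mv_fps M v i $ m = smat_mult M (\<lambda>k m. v k $ m) i m"
  unfolding mv_fps_def smat_mult_def by simp

lemma coeff_chi: "(\<lambda>k m. coeff (chi n p a k) m) = Xm n p a"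
  unfolding chi_def Xm_def by (intro ext) auto

lemma nth_chistar: "(\<lambda>k m. chistar n p a k $ m) = Ym n p a"
  unfolding chistar_def Ym_def by (intro ext) auto

context
  fixes n :: "nat \<Rightarrow> nat" and p :: nat
  assumes p: "p \<ge> 1" and n: "\<forall>a\<in>{1..p}. n a \<ge> 1"
begin

lemma Ups_rowfin: "rowfin (Ups n p)"
  unfolding rowfin_def Ups_char[OF p n]
  by (auto intro: finite_subset[of _ "{nxt n p i}" for i])

lemma Ups_colfin: "colfin (Ups n p)"
proof -
  have "{k. Ups n p k j \<noteq> 0} = nxt n p -` {j}" for j
    unfolding Ups_char[OF p n] by auto
  thus ?thesis unfolding colfin_def using finite_vimageI[OF _ nxt_inj[OF p n]] by auto
qed

lemma Ups_mult_left: "smat_mult (Ups n p) B i j = B (nxt n p i) j"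
  by (subst mult_eq_sum[of "{nxt n p i}"]) (auto simp: Ups_char[OF p n] split: if_splits)

lemma UpsT_mult_right: "smat_mult B (smat_transpose (Ups n p)) i j = B i (nxt n p j)"
  by (subst mult_eq_sum[of "{nxt n p j}"])
     (auto simp: Ups_char[OF p n] smat_transpose_def split: if_splits)

lemma Ym_colfin: "colfin (Ym n p b)"
  unfolding colfin_def
proof
  fix m
  have "{k. Ym n p b k m \<noteq> 0} \<subseteq> {eidx n p b (m - 1)}"
  proof
    fix k assume "k \<in> {k. Ym n p b k m \<noteq> 0}"
    hence h: "aidx n p k = b" "m = Suc (kidx n p k)" unfolding Ym_def by (auto split: if_splits)
    have "k = eidx n p (aidx n p k) (kidx n p k)" using eidx_aidx_kidx[OF p n] by simp
    thus "k \<in> {eidx n p b (m - 1)}" using h by simp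
  qed
  thus "finite {k. Ym n p b k m \<noteq> 0}" by (rule finite_subset) simp
qed

lemma Ups_Xm: "smat_mult (Ups n p) (Xm n p a) = (\<lambda>k m. if m = 0 then 0 else Xm n p a k (m - 1))"
  by (intro ext) (auto simp: Ups_mult_left Xm_def aidx_nxt[OF p n] kidx_nxt[OF p n])

lemma UpsT_Ym:
  assumes b: "b \<in> {1..p}"
  shows "smat_mult (smat_transpose (Ups n p)) (Ym n p b)
     = (\<lambda>k m. Ym n p b k (Suc m) - (if m = 0 \<and> k = eidx n p b 0 then 1 else 0))"
proof (intro ext)
  fix i m
  show "smat_mult (smat_transpose (Ups n p)) (Ym n p b) i m
     = Ym n p b i (Suc m) - (if m = 0 \<and> i = eidx n p b 0 then 1 else 0)"
  proof (cases "kidx n p i")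
    case 0
    have "smat_mult (smat_transpose (Ups n p)) (Ym n p b) i m = (\<Sum>k\<in>{}. smat_transpose (Ups n p) i k * Ym n p b k m)"
    proof (rule mult_eq_sum)
      fix k assume "smat_transpose (Ups n p) i k \<noteq> 0"
      hence "i = nxt n p k" unfolding smat_transpose_def Ups_char[OF p n] by (auto split: if_splits)
      hence "kidx n p i = Suc (kidx n p k)" using kidx_nxt[OF p n] by simp
      thus "k \<in> {}" using 0 by simp
    qed simp
    moreover have "(i = eidx n p b 0) \<longleftrightarrow> aidx n p i = b"
      using eidx_char[OF p n b, of i 0] 0 by simp
    ultimately show ?thesis using 0 unfolding Ym_def by auto
  next
    case (Suc k')
    define j0 where "j0 = eidx n p (aidx n p i) k'"
    have ar: "aidx n p i \<in> {1..p}" by (rule aidx_range[OF p n])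
    have nj: "nxt n p j0 = i"
      unfolding nxt_def j0_def using aidx_eidx[OF p n ar] kidx_eidx[OF p n ar] Suc
        eidx_aidx_kidx[OF p n, of i] by simp
    have aj: "aidx n p j0 = aidx n p i" and kj: "kidx n p j0 = k'"
      unfolding j0_def using aidx_eidx[OF p n ar] kidx_eidx[OF p n ar] by auto
    have "smat_mult (smat_transpose (Ups n p)) (Ym n p b) i m = (\<Sum>k\<in>{j0}. smat_transpose (Ups n p) i k * Ym n p b k m)"
    proof (rule mult_eq_sum)
      fix k assume "smat_transpose (Ups n p) i k \<noteq> 0"
      hence "i = nxt n p k" unfolding smat_transpose_def Ups_char[OF p n] by (auto split: if_splits)
      hence "nxt n p k = nxt n p j0" using nj by simp
      thus "k \<in> {j0}" using nxt_inj[OF p n] by (auto dest: injD)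
    qed simp
    also have "\<dots> = Ym n p b j0 m"
      using nj by (simp add: smat_transpose_def Ups_char[OF p n])
    finally have L: "smat_mult (smat_transpose (Ups n p)) (Ym n p b) i m = Ym n p b j0 m" .
    have "i \<noteq> eidx n p b 0" using kidx_eidx[OF p n b, of 0] Suc by auto
    thus ?thesis unfolding L Ym_def using aj kj Suc by auto
  qed
qed

lemma poly_part:
  assumes P: "rowfin P" and Q: "rowfin Q" and QP: "smat_mult Q P = smat_id"
  shows "mv_poly (smat_mult (smat_mult P (Ups n p)) Q) (\<lambda>i. mv_poly P (chi n p a) i) i
       = [:0, 1:] * mv_poly P (chi n p a) i"
proof (rule poly_eqI)
  fix m
  let ?J = "smat_mult (smat_mult P (Ups n p)) Q"
  have PU: "rowfin (smat_mult P (Ups n p))" using rowfin_mult[OF P Ups_rowfin] .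
  have J: "rowfin ?J" using rowfin_mult[OF PU Q] .
  have V: "(\<lambda>k m. coeff (mv_poly P (chi n p a) k) m) = smat_mult P (Xm n p a)"
    by (intro ext) (simp add: coeff_mv_poly[OF P] coeff_chi)
  have "smat_mult ?J (smat_mult P (Xm n p a)) = smat_mult (smat_mult P (Ups n p)) (smat_mult Q (smat_mult P (Xm n p a)))"
    by (rule assoc_row[OF PU Q])
  also have "\<dots> = smat_mult (smat_mult P (Ups n p)) (Xm n p a)"
    by (simp add: assoc_row[OF Q P, symmetric] QP)
  also have "\<dots> = smat_mult P (smat_mult (Ups n p) (Xm n p a))"
    by (rule assoc_row[OF P Ups_rowfin])
  finally have E: "smat_mult ?J (smat_mult P (Xm n p a)) = smat_mult P (\<lambda>k m. if m = 0 then 0 else Xm n p a k (m - 1))"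
    by (simp add: Ups_Xm)
  have "coeff (mv_poly ?J (\<lambda>i. mv_poly P (chi n p a) i) i) m = smat_mult ?J (smat_mult P (Xm n p a)) i m"
    by (simp add: coeff_mv_poly[OF J] V)
  also have "\<dots> = (if m = 0 then 0 else smat_mult P (Xm n p a) i (m - 1))"
    unfolding E smat_mult_def by simp
  also have "\<dots> = coeff ([:0, 1:] * mv_poly P (chi n p a) i) m"
    by (simp add: coeff_pCons' coeff_mv_poly[OF P] coeff_chi)
  finally show "coeff (mv_poly ?J (\<lambda>i. mv_poly P (chi n p a) i) i) m = coeff ([:0, 1:] * mv_poly P (chi n p a) i) m" .
qed

lemma fps_part:
  assumes P: "colfin P" and Q: "colfin Q" and QP: "smat_mult Q P = smat_id" and b: "b \<in> {1..p}"
  shows "fps_to_fls (mv_fps (smat_mult (smat_mult P (smat_transpose (Ups n p))) Q) (\<lambda>i. mv_fps P (chistar n p b) i) i)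
       = fls_X_inv * fps_to_fls (mv_fps P (chistar n p b) i) - fls_const (P i (eidx n p b 0))"
proof -
  let ?U = "smat_transpose (Ups n p)"
  let ?J = "smat_mult (smat_mult P ?U) Q"
  let ?Y = "Ym n p b"
  have UT: "colfin ?U" using Ups_rowfin by (simp add: rowfin_colfin)
  have PY: "colfin (smat_mult P ?Y)" using colfin_mult[OF P Ym_colfin] .
  have W: "(\<lambda>k m. mv_fps P (chistar n p b) k $ m) = smat_mult P ?Y"
    by (intro ext) (simp add: nth_mv_fps nth_chistar)
  have "smat_mult ?J (smat_mult P ?Y) = smat_mult (smat_mult P ?U) (smat_mult Q (smat_mult P ?Y))"
    by (rule assoc_col[OF Q PY])
  also have "\<dots> = smat_mult (smat_mult P ?U) ?Y"
    by (simp add: assoc_col[OF P Ym_colfin, symmetric] QP)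
  also have "\<dots> = smat_mult P (smat_mult ?U ?Y)"
    by (rule assoc_col[OF UT Ym_colfin])
  finally have E: "smat_mult ?J (smat_mult P ?Y) = smat_mult P (\<lambda>k m. ?Y k (Suc m) - (if m = 0 \<and> k = eidx n p b 0 then 1 else 0))"
    by (simp add: UpsT_Ym[OF b])
  have E2: "smat_mult P (\<lambda>k m. ?Y k (Suc m) - (if m = 0 \<and> k = eidx n p b 0 then 1 else 0)) i m
      = smat_mult P ?Y i (Suc m) - (if m = 0 then P i (eidx n p b 0) else 0)" for m
  proof -
    define F where "F = insert (eidx n p b 0) {k. ?Y k (Suc m) \<noteq> 0}"
    have fF: "finite F" unfolding F_def using Ym_colfin unfolding colfin_def by auto
    have "smat_mult P (\<lambda>k m. ?Y k (Suc m) - (if m = 0 \<and> k = eidx n p b 0 then 1 else 0)) i m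
        = (\<Sum>k\<in>F. P i k * (?Y k (Suc m) - (if m = 0 \<and> k = eidx n p b 0 then 1 else 0)))"
      by (rule mult_eq_sum[OF fF]) (auto simp: F_def split: if_splits)
    also have "\<dots> = (\<Sum>k\<in>F. P i k * ?Y k (Suc m)) - (\<Sum>k\<in>F. P i k * (if m = 0 \<and> k = eidx n p b 0 then 1 else 0))"
      by (simp add: right_diff_distrib sum_subtractf)
    also have "(\<Sum>k\<in>F. P i k * ?Y k (Suc m)) = smat_mult P ?Y i (Suc m)"
      by (rule mult_eq_sum[OF fF, symmetric]) (auto simp: F_def)
    also have "(\<Sum>k\<in>F. P i k * (if m = 0 \<and> k = eidx n p b 0 then 1 else 0)) = (if m = 0 then P i (eidx n p b 0) else 0)"
      using fF by (auto simp: F_def if_distrib cong: if_cong)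
    finally show ?thesis .
  qed
  have Y0: "smat_mult P ?Y i 0 = 0"
    unfolding smat_mult_def Ym_def by simp
  show ?thesis
  unfolding fls_eq_iff
  proof
    fix k :: int
    show "fls_nth (fps_to_fls (mv_fps ?J (\<lambda>i. mv_fps P (chistar n p b) i) i)) k
        = fls_nth (fls_X_inv * fps_to_fls (mv_fps P (chistar n p b) i) - fls_const (P i (eidx n p b 0))) k"
    proof (cases "k < 0")
      case True
      thus ?thesis using Y0 by (auto simp: fls_X_inv_times_conv_shift nth_mv_fps nth_chistar)
    next
      case False
      then obtain m where k: "k = int m" by (metis nonneg_int_cases not_less)
      have "nat (int m + 1) = Suc m" by simp
      thus ?thesis unfolding k
        by (simp add: fls_X_inv_times_conv_shift nth_mv_fps nth_chistar W E E2)
    qed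
  qed
qed

end



theorem proposition2p14:
  fixes M :: "real measure" and I :: "real set"
    and p1 p2 :: nat and n1 n2 :: "nat \<Rightarrow> nat"
    and w1 w2 :: "nat \<Rightarrow> real \<Rightarrow> real"
    and S Sinv Sbar Sbarinv :: smat
  assumes interval: "is_interval I"
    and sets_M: "sets M = sets (restrict_space borel I)"
    and finite_M: "finite_measure M"
    and p1: "p1 \<ge> 1" and p2: "p2 \<ge> 1"
    and n1: "\<forall>a\<in>{1..p1}. n1 a \<ge> 1" and n2: "\<forall>b\<in>{1..p2}. n2 b \<ge> 1"
    and moments: "\<forall>k. \<forall>a\<in>{1..p1}. \<forall>b\<in>{1..p2}.
                    integrable M (\<lambda>x. x ^ k * w1 a x * w2 b x)"
    and S_lower: "lower_tri S" and S_unit: "\<forall>i. S i i = 1"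
    and Sinv_lower: "lower_tri Sinv"
    and Sinv: "smat_mult S Sinv = smat_id" "smat_mult Sinv S = smat_id"
    and Sbar_upper: "upper_tri Sbar" and Sbar_diag: "\<forall>i. Sbar i i \<noteq> 0"
    and Sbarinv_upper: "upper_tri Sbarinv"
    and Sbarinv: "smat_mult Sbar Sbarinv = smat_id" "smat_mult Sbarinv Sbar = smat_id"
    and gauss_borel: "(\<lambda>i j. integral\<^sup>L M (\<lambda>x. x ^ (kidx n1 p1 i + kidx n2 p2 j)
                         * w1 (aidx n1 p1 i) x * w2 (aidx n2 p2 j) x))
                      = smat_mult Sinv Sbar"
  shows "let J = smat_mult (smat_mult S (Ups n1 p1)) Sinv;
             A = (\<lambda>a. mv_poly S (chi n1 p1 a));
             Abar = (\<lambda>b. mv_poly (smat_transpose Sbarinv) (chi n2 p2 b));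
             C = (\<lambda>b. mv_fps Sbar (chistar n2 p2 b));
             Cbar = (\<lambda>a. mv_fps (smat_transpose Sinv) (chistar n1 p1 a));
             c = (\<lambda>b i. Sbar i (eidx n2 p2 b 0));
             cbar = (\<lambda>a i. Sinv (eidx n1 p1 a 0) i)
         in J = smat_mult (smat_mult Sbar (smat_transpose (Ups n2 p2))) Sbarinv
          \<and> (\<forall>a\<in>{1..p1}. \<forall>i. mv_poly J (A a) i = [:0, 1:] * A a i)
          \<and> (\<forall>b\<in>{1..p2}. \<forall>i. mv_poly (smat_transpose J) (Abar b) i = [:0, 1:] * Abar b i)
          \<and> (\<forall>b\<in>{1..p2}. \<forall>i. fps_to_fls (mv_fps J (C b) i)
                 = fls_X_inv * fps_to_fls (C b i) - fls_const (c b i))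
          \<and> (\<forall>a\<in>{1..p1}. \<forall>i. fps_to_fls (mv_fps (smat_transpose J) (Cbar a) i)
                 = fls_X_inv * fps_to_fls (Cbar a i) - fls_const (cbar a i))"
proof -
  define U1 where "U1 = Ups n1 p1"
  define U2 where "U2 = Ups n2 p2"
  define J where "J = smat_mult (smat_mult S U1) Sinv"
  have rS: "rowfin S" and rSi: "rowfin Sinv" using S_lower Sinv_lower by (simp_all add: lower_rowfin)
  have cSb: "colfin Sbar" and cSbi: "colfin Sbarinv" using Sbar_upper Sbarinv_upper by (simp_all add: upper_colfin)
  have rU1: "rowfin U1" and cU1: "colfin U1" unfolding U1_def using Ups_rowfin[OF p1 n1] Ups_colfin[OF p1 n1] .
  have rU2: "rowfin U2" and cU2: "colfin U2" unfolding U2_def using Ups_rowfin[OF p2 n2] Ups_colfin[OF p2 n2] .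
  have cU2T: "colfin (smat_transpose U2)" using rU2 by (simp add: rowfin_colfin)
  have cU1T: "colfin (smat_transpose U1)" using rU1 by (simp add: rowfin_colfin)
  define G where "G = smat_mult Sinv Sbar"
  have H: "smat_mult U1 G = smat_mult G (smat_transpose U2)"
  proof (intro ext)
    fix i j
    show "smat_mult U1 G i j = smat_mult G (smat_transpose U2) i j"
      unfolding U1_def U2_def Ups_mult_left[OF p1 n1] UpsT_mult_right[OF p2 n2] G_def
        gauss_borel[symmetric]
      by (simp add: aidx_nxt[OF p1 n1] kidx_nxt[OF p1 n1] aidx_nxt[OF p2 n2] kidx_nxt[OF p2 n2])
  qed
  have rSU1: "rowfin (smat_mult S U1)" using rowfin_mult[OF rS rU1] .
  have "smat_mult J Sbar = smat_mult (smat_mult S U1) G"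
    unfolding J_def G_def by (rule assoc_row[OF rSU1 rSi])
  also have "\<dots> = smat_mult S (smat_mult G (smat_transpose U2))"
    by (simp add: assoc_row[OF rS rU1] H)
  also have "\<dots> = smat_mult S (smat_mult Sinv (smat_mult Sbar (smat_transpose U2)))"
    unfolding G_def by (simp add: assoc_col[OF cSb cU2T])
  also have "\<dots> = smat_mult Sbar (smat_transpose U2)"
    by (simp add: assoc_row[OF rS rSi, symmetric] Sinv(1))
  finally have JSb: "smat_mult J Sbar = smat_mult Sbar (smat_transpose U2)" .
  have J2: "J = smat_mult (smat_mult Sbar (smat_transpose U2)) Sbarinv"
  proof -
    have "J = smat_mult J (smat_mult Sbar Sbarinv)" by (simp add: Sbarinv(1))
    also have "\<dots> = smat_mult (smat_mult J Sbar) Sbarinv" by (simp add: assoc_col[OF cSb cSbi])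
    finally show ?thesis by (simp add: JSb)
  qed
  have JT2: "smat_transpose J = smat_mult (smat_mult (smat_transpose Sbarinv) U2) (smat_transpose Sbar)"
  proof -
    have "smat_transpose J = smat_mult (smat_transpose Sbarinv) (smat_mult U2 (smat_transpose Sbar))"
      unfolding J2 by (simp add: mult_transpose)
    also have "\<dots> = smat_mult (smat_mult (smat_transpose Sbarinv) U2) (smat_transpose Sbar)"
      using cSbi by (simp add: assoc_row[OF _ rU2, symmetric] colfin_rowfin)
    finally show ?thesis .
  qed
  have JT1: "smat_transpose J = smat_mult (smat_mult (smat_transpose Sinv) (smat_transpose U1)) (smat_transpose S)"
  proof -
    have "smat_transpose J = smat_mult (smat_transpose Sinv) (smat_mult (smat_transpose U1) (smat_transpose S))"
      unfolding J_def by (simp add: mult_transpose)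
    also have "\<dots> = smat_mult (smat_mult (smat_transpose Sinv) (smat_transpose U1)) (smat_transpose S)"
      using rS by (simp add: assoc_col[OF cU1T, symmetric] rowfin_colfin)
    finally show ?thesis .
  qed
  have id2: "smat_mult (smat_transpose Sbar) (smat_transpose Sbarinv) = smat_id"
    using Sbarinv(2) by (metis mult_transpose transpose_id)
  have id1: "smat_mult (smat_transpose S) (smat_transpose Sinv) = smat_id"
    using Sinv(2) by (metis mult_transpose transpose_id)
  have rSbiT: "rowfin (smat_transpose Sbarinv)" and rSbT: "rowfin (smat_transpose Sbar)"
    using cSbi cSb by (simp_all add: colfin_rowfin)
  have cSiT: "colfin (smat_transpose Sinv)" and cST: "colfin (smat_transpose S)"
    using rSi rS by (simp_all add: rowfin_colfin)
  show ?thesis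
    unfolding Let_def J_def[symmetric] U1_def[symmetric] U2_def[symmetric]
  proof (intro conjI ballI allI)
    show "J = smat_mult (smat_mult Sbar (smat_transpose U2)) Sbarinv" by (rule J2)
  next
    fix a i assume a: "a \<in> {1..p1}"
    show "mv_poly J (\<lambda>i. mv_poly S (chi n1 p1 a) i) i = [:0, 1:] * mv_poly S (chi n1 p1 a) i"
      unfolding J_def U1_def by (rule poly_part[OF p1 n1 rS rSi Sinv(2)])
  next
    fix b i assume b: "b \<in> {1..p2}"
    show "mv_poly (smat_transpose J) (\<lambda>i. mv_poly (smat_transpose Sbarinv) (chi n2 p2 b) i) i
        = [:0, 1:] * mv_poly (smat_transpose Sbarinv) (chi n2 p2 b) i"
      unfolding JT2 U2_def by (rule poly_part[OF p2 n2 rSbiT rSbT id2])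
  next
    fix b i assume b: "b \<in> {1..p2}"
    show "fps_to_fls (mv_fps J (\<lambda>i. mv_fps Sbar (chistar n2 p2 b) i) i)
        = fls_X_inv * fps_to_fls (mv_fps Sbar (chistar n2 p2 b) i) - fls_const (Sbar i (eidx n2 p2 b 0))"
      unfolding J2 U2_def by (rule fps_part[OF p2 n2 cSb cSbi Sbarinv(2) b])
  next
    fix a i assume a: "a \<in> {1..p1}"
    have "fps_to_fls (mv_fps (smat_transpose J) (\<lambda>i. mv_fps (smat_transpose Sinv) (chistar n1 p1 a) i) i)
        = fls_X_inv * fps_to_fls (mv_fps (smat_transpose Sinv) (chistar n1 p1 a) i) - fls_const (smat_transpose Sinv i (eidx n1 p1 a 0))"
      unfolding JT1 U1_def by (rule fps_part[OF p1 n1 cSiT cST id1 a])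
    thus "fps_to_fls (mv_fps (smat_transpose J) (\<lambda>i. mv_fps (smat_transpose Sinv) (chistar n1 p1 a) i) i)
        = fls_X_inv * fps_to_fls (mv_fps (smat_transpose Sinv) (chistar n1 p1 a) i) - fls_const (Sinv (eidx n1 p1 a 0) i)"
      by (simp add: smat_transpose_def)
  qed
qed


end
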